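(* If $X$ is a topological space satisfying ${\sf S}_1(\mathcal{G}_K,\mathcal{G}_\Gamma)$, then $X$ is productively Lindel\"of, productively Menger, and productively Hurewicz.
   Context: All spaces are infinite ${\sf T}_1$ topological spaces. $\mathcal{G}_K$ is the family of all collections $\mathcal{U}$ of ${\sf G}_\delta$ subsets of $X$ with $X\notin\mathcal{U}$ such that each compact subset of $X$ is contained in some member of $\mathcal{U}$. $\mathcal{G}_\Gamma$ is the family of infinite collections $\mathcal{U}$ of ${\sf G}_\delta$ subsets of $X$ such that every infinite subcollection of $\mathcal{U}$ covers $X$. ${\sf S}_1(\mathcal{A},\mathcal{B})$: for each sequence $(A_n)$ of elements of $\mathcal{A}$ there are $B_n\in A_n$ with $\{B_n:n\in\mathbb{N}\}\in\mathcal{B}$. A space is Menger if for each sequence $(\mathcal{U}_n)$ of open covers there are finite $\mathcal{V}_n\subseteq\mathcal{U}_n$ with $\bigcup_n\mathcal{V}_n$ a cover; it is Hurewicz if for each sequence $(\mathcal{U}_n)$ of open covers there are finite $\mathcal{V}_n\subseteq\mathcal{U}_n$ such that each point belongs to $\bigcup\mathcal{V}_n$ for all but finitely many $n$. For a property ${\sf Q}$, $X$ is productively ${\sf Q}$ if $X\times Y$ has ${\sf Q}$ for every space $Y$ having ${\sf Q}$. *)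

theory Defs
  imports "HOL-Analysis.Analysis"
begin

definition open_cover :: "'a topology \<Rightarrow> 'a set set \<Rightarrow> bool" where
  "open_cover X \<U> \<longleftrightarrow> (\<forall>U\<in>\<U>. openin X U) \<and> \<Union>\<U> = topspace X"

definition G_K :: "'a topology \<Rightarrow> 'a set set set" where
  "G_K X = {\<U>. (\<forall>U\<in>\<U>. gdelta_in X U) \<and> topspace X \<notin> \<U> \<and>
                (\<forall>K. compactin X K \<longrightarrow> (\<exists>U\<in>\<U>. K \<subseteq> U))}"

definition G_Gamma :: "'a topology \<Rightarrow> 'a set set set" where
  "G_Gamma X = {\<U>. infinite \<U> \<and> (\<forall>U\<in>\<U>. gdelta_in X U) \<and>
                    (\<forall>\<V>. \<V> \<subseteq> \<U> \<and> infinite \<V> \<longrightarrow> \<Union>\<V> = topspace X)}"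

definition S1 :: "'a set set set \<Rightarrow> 'a set set set \<Rightarrow> bool" where
  "S1 \<A> \<B> \<longleftrightarrow> (\<forall>A :: nat \<Rightarrow> 'a set set. (\<forall>n. A n \<in> \<A>) \<longrightarrow>
                 (\<exists>B :: nat \<Rightarrow> 'a set. (\<forall>n. B n \<in> A n) \<and> range B \<in> \<B>))"

definition Menger_space :: "'a topology \<Rightarrow> bool" where
  "Menger_space X \<longleftrightarrow> (\<forall>\<U> :: nat \<Rightarrow> 'a set set. (\<forall>n. open_cover X (\<U> n)) \<longrightarrow>
      (\<exists>\<V> :: nat \<Rightarrow> 'a set set. (\<forall>n. finite (\<V> n) \<and> \<V> n \<subseteq> \<U> n) \<and>
           \<Union>(\<Union>n. \<V> n) = topspace X))"

definition Hurewicz_space :: "'a topology \<Rightarrow> bool" where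
  "Hurewicz_space X \<longleftrightarrow> (\<forall>\<U> :: nat \<Rightarrow> 'a set set. (\<forall>n. open_cover X (\<U> n)) \<longrightarrow>
      (\<exists>\<V> :: nat \<Rightarrow> 'a set set. (\<forall>n. finite (\<V> n) \<and> \<V> n \<subseteq> \<U> n) \<and>
           (\<forall>x\<in>topspace X. \<forall>\<^sub>F n in sequentially. x \<in> \<Union>(\<V> n))))"

text \<open>X is productively Q: X \<times> Y has Q for every space Y having Q
  (spaces range over infinite T1 spaces, per the standing convention).\<close>
definition productively ::
    "(('a \<times> 'b) topology \<Rightarrow> bool) \<Rightarrow> ('b topology \<Rightarrow> bool) \<Rightarrow> 'a topology \<Rightarrow> bool" where
  "productively Qprod Q X \<longleftrightarrow>
     (\<forall>Y. infinite (topspace Y) \<and> t1_space Y \<and> Q Y \<longrightarrow> Qprod (prod_topology X Y))"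

end

theory Submission
  imports Defs
begin

lemma fin_tube:
  assumes W: "\<forall>w\<in>W. openin (prod_topology X Y) w"
    and cov: "topspace (prod_topology X Y) \<subseteq> \<Union>W"
    and K: "compactin X K" and y: "y \<in> topspace Y"
  shows "\<exists>U V F. openin X U \<and> openin Y V \<and> K \<subseteq> U \<and> y \<in> V \<and> finite F \<and> F \<subseteq> W \<and> U \<times> V \<subseteq> \<Union>F"
proof -
  have c: "compactin (prod_topology X Y) (K \<times> {y})"
    using K y by (simp add: compactin_Times)
  have "K \<times> {y} \<subseteq> \<Union>W"
    using cov K y compactin_subset_topspace by fastforce
  then obtain F where F: "finite F" "F \<subseteq> W" "K \<times> {y} \<subseteq> \<Union>F"
    using compactinD[OF c, of W] W by blast
  have "openin (prod_topology X Y) (\<Union>F)" using F W by blast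
  then obtain U V where "openin X U" "openin Y V" "K \<subseteq> U" "y \<in> V" "U \<times> V \<subseteq> \<Union>F"
    using tube_lemma_left[OF _ K y F(3)] by blast
  then show ?thesis using F by blast
qed

lemma sel:
  fixes A :: "nat \<Rightarrow> 'a set set"
  assumes S: "S1 (G_K X) (G_Gamma X)"
    and gd: "\<And>m U. U \<in> A m \<Longrightarrow> gdelta_in X U"
    and cp: "\<And>m K. compactin X K \<Longrightarrow> \<exists>U\<in>A m. K \<subseteq> U"
  shows "\<exists>B. (\<forall>m. B m \<in> A m) \<and> topspace X \<subseteq> \<Union>(range B)"
proof (cases "\<exists>m0. topspace X \<in> A m0")
  case True
  then obtain m0 where m0: "topspace X \<in> A m0" by blast
  have ne: "\<And>m. \<exists>U. U \<in> A m" using cp[of "{}"] by auto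
  define B where "B m = (if m = m0 then topspace X else (SOME U. U \<in> A m))" for m
  have "\<forall>m. B m \<in> A m"
  proof
    fix m show "B m \<in> A m"
    proof (cases "m = m0")
      case True then show ?thesis using m0 by (simp add: B_def)
    next
      case False
      obtain U where U: "U \<in> A m" using ne[of m] by blast
      have "(SOME U. U \<in> A m) \<in> A m" by (rule someI[of "\<lambda>U. U \<in> A m", OF U])
      then show ?thesis using False by (simp add: B_def)
    qed
  qed
  moreover have "B m0 = topspace X" by (simp add: B_def)
  then have "topspace X \<subseteq> \<Union>(range B)" by (metis Union_upper rangeI)
  ultimately show ?thesis by (intro exI[of _ B] conjI)
next
  case False
  have GK: "A m \<in> G_K X" for m unfolding G_K_def using False gd cp by blast
  obtain B where B: "\<forall>m. B m \<in> A m" "range B \<in> G_Gamma X"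
    using S[unfolded S1_def, rule_format, of A, OF GK] by blast
  then have "infinite (range B)" "\<forall>\<V>. \<V> \<subseteq> range B \<and> infinite \<V> \<longrightarrow> \<Union>\<V> = topspace X"
    unfolding G_Gamma_def by simp_all
  then have "\<Union>(range B) = topspace X" by simp
  then show ?thesis using B(1) by (intro exI[of _ B] conjI) simp_all
qed

definition tubecov :: "'a topology \<Rightarrow> 'b topology \<Rightarrow> ('a \<times> 'b) set set \<Rightarrow> 'a set \<Rightarrow> 'b set set" where
  "tubecov X Y W K = {V. openin Y V \<and> (\<exists>U F. openin X U \<and> K \<subseteq> U \<and> finite F \<and> F \<subseteq> W \<and> U \<times> V \<subseteq> \<Union>F)}"

definition tubeP where
  "tubeP X W K V p \<longleftrightarrow> openin X (fst p) \<and> K \<subseteq> fst p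
     \<and> finite (snd p) \<and> snd p \<subseteq> W \<and> fst p \<times> V \<subseteq> \<Union>(snd p)"

lemma tubecov_ex:
  assumes "V \<in> tubecov X Y W K"
  shows "\<exists>p. tubeP X W K V p"
proof -
  from assms obtain U F where "openin X U" "K \<subseteq> U" "finite F" "F \<subseteq> W" "U \<times> V \<subseteq> \<Union>F"
    unfolding tubecov_def by blast
  then have "tubeP X W K V (U, F)" by (simp add: tubeP_def)
  then show ?thesis by blast
qed

lemma tubecov_some:
  assumes "V \<in> tubecov X Y W K"
  shows "tubeP X W K V (SOME p. tubeP X W K V p)"
  using tubecov_ex[OF assms] by (rule someI_ex)

lemma tubecov_cover:
  assumes W: "\<forall>w\<in>W. openin (prod_topology X Y) w"
    and cov: "topspace (prod_topology X Y) \<subseteq> \<Union>W"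
    and K: "compactin X K"
  shows "open_cover Y (tubecov X Y W K)"
proof -
  have "topspace Y \<subseteq> \<Union>(tubecov X Y W K)"
  proof
    fix y assume "y \<in> topspace Y"
    then obtain U V F where "openin X U" "openin Y V" "K \<subseteq> U" "y \<in> V" "finite F" "F \<subseteq> W" "U \<times> V \<subseteq> \<Union>F"
      using fin_tube[OF W cov K \<open>y \<in> topspace Y\<close>] by blast
    then have "V \<in> tubecov X Y W K" unfolding tubecov_def by blast
    then show "y \<in> \<Union>(tubecov X Y W K)" using \<open>y \<in> V\<close> by blast
  qed
  moreover have op: "\<forall>V\<in>tubecov X Y W K. openin Y V" by (simp add: tubecov_def)
  moreover have "\<Union>(tubecov X Y W K) \<subseteq> topspace Y"
    using op openin_subset by blast
  ultimately show ?thesis unfolding open_cover_def by blast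
qed

lemma core:
  fixes X :: "'a topology" and Y :: "'b topology" and W :: "nat \<Rightarrow> ('a \<times> 'b) set set"
    and Pcov :: "(nat \<Rightarrow> 'b set set) \<Rightarrow> bool"
  assumes S: "S1 (G_K X) (G_Gamma X)"
    and Wop: "\<And>n. \<forall>w\<in>W n. openin (prod_topology X Y) w"
    and Wcov: "\<And>n. topspace (prod_topology X Y) \<subseteq> \<Union>(W n)"
    and vvex: "\<And>m K. compactin X K \<Longrightarrow> \<exists>vs. (\<forall>k. finite (vs k) \<and> vs k \<subseteq> tubecov X Y (W (k+m)) K) \<and> Pcov vs"
  shows "\<exists>H. (\<forall>n. finite (H n) \<and> H n \<subseteq> W n) \<and>
           (\<forall>x\<in>topspace X. \<exists>vs m. Pcov vs \<and> (\<forall>k y. y \<in> \<Union>(vs k) \<longrightarrow> (x,y) \<in> \<Union>(H (k+m))))"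
proof -
  define Oc where "Oc n K = tubecov X Y (W n) K" for n K
  define g where "g n K V = (SOME p. tubeP X (W n) K V p)" for n K V
  have gP: "tubeP X (W n) K V (g n K V)" if "V \<in> Oc n K" for n K V
    using that unfolding Oc_def g_def by (rule tubecov_some)
  define PP where "PP m K vs \<longleftrightarrow> (\<forall>k. finite (vs k) \<and> vs k \<subseteq> Oc (k+m) K) \<and> Pcov vs" for m K vs
  define vv where "vv m K = (SOME vs. PP m K vs)" for m K
  have vvP: "PP m K (vv m K)" if "compactin X K" for m K
  proof -
    have "\<exists>vs. PP m K vs" using vvex[OF that, of m] unfolding PP_def Oc_def .
    then show ?thesis unfolding vv_def by (rule someI_ex)
  qed
  define G where "G m K = \<Inter> (insert (topspace X) ((\<lambda>(k,V). fst (g (k+m) K V)) ` (SIGMA k:UNIV. vv m K k)))" for m K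
  define A where "A m = {G m K | K. compactin X K}" for m
  have Ggd: "gdelta_in X (G m K)" if K: "compactin X K" for m K
  proof -
    have fin: "finite (vv m K k)" "vv m K k \<subseteq> Oc (k+m) K" for k
      using vvP[OF K, of m] unfolding PP_def by auto
    have "countable (SIGMA k:UNIV. vv m K k)"
      by (rule countable_SIGMA) (simp_all add: fin countable_finite)
    then have c: "countable (insert (topspace X) ((\<lambda>(k,V). fst (g (k+m) K V)) ` (SIGMA k:UNIV. vv m K k)))"
      by simp
    have "gdelta_in X T" if "T \<in> insert (topspace X) ((\<lambda>(k,V). fst (g (k+m) K V)) ` (SIGMA k:UNIV. vv m K k))" for T
    proof -
      { fix k V assume "V \<in> vv m K k"
        then have "V \<in> Oc (k+m) K" using fin by blast
        then have "openin X (fst (g (k+m) K V))" using gP unfolding tubeP_def by blast }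
      then show ?thesis using that by (auto intro: open_imp_gdelta_in)
    qed
    then show ?thesis unfolding G_def using c by (intro gdelta_in_Inter) auto
  qed
  have KG: "K \<subseteq> G m K" if K: "compactin X K" for m K
  proof -
    have fin: "vv m K k \<subseteq> Oc (k+m) K" for k
      using vvP[OF K, of m] unfolding PP_def by auto
    have "K \<subseteq> topspace X" using K compactin_subset_topspace by blast
    moreover
    { fix k V assume "V \<in> vv m K k"
      then have "V \<in> Oc (k+m) K" using fin by blast
      then have "K \<subseteq> fst (g (k+m) K V)" using gP unfolding tubeP_def by blast }
    ultimately show ?thesis unfolding G_def by auto
  qed
  have "\<exists>B. (\<forall>m. B m \<in> A m) \<and> topspace X \<subseteq> \<Union>(range B)"
  proof (rule sel[OF S])
    fix m U assume "U \<in> A m" then show "gdelta_in X U" unfolding A_def using Ggd by blast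
  next
    fix m K assume "compactin X K" then show "\<exists>U\<in>A m. K \<subseteq> U" unfolding A_def using KG by blast
  qed
  then obtain B where B: "\<forall>m. B m \<in> A m" "topspace X \<subseteq> \<Union>(range B)" by blast
  have "\<forall>m. \<exists>K. compactin X K \<and> B m = G m K" using B(1) unfolding A_def by blast
  from choice[OF this] obtain KK where KK: "\<And>m. compactin X (KK m)" "\<And>m. B m = G m (KK m)" by blast
  define H where "H n = (\<Union>m\<in>{..n}. \<Union>V\<in>vv m (KK m) (n-m). snd (g n (KK m) V))" for n
  have inO: "V \<in> Oc n (KK m)" if "m \<le> n" "V \<in> vv m (KK m) (n-m)" for m n V
  proof -
    have "vv m (KK m) (n-m) \<subseteq> Oc (n-m+m) (KK m)" using vvP[OF KK(1), of m] unfolding PP_def by blast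
    then show ?thesis using that by auto
  qed
  have "finite (H n) \<and> H n \<subseteq> W n" for n
  proof -
    have "finite (snd (g n (KK m) V)) \<and> snd (g n (KK m) V) \<subseteq> W n" if "m \<le> n" "V \<in> vv m (KK m) (n-m)" for m V
      using gP[OF inO[OF that]] unfolding tubeP_def by blast
    moreover have "finite (vv m (KK m) (n-m))" for m using vvP[OF KK(1), of m] unfolding PP_def by blast
    ultimately show ?thesis unfolding H_def by auto
  qed
  moreover have "\<exists>vs m. Pcov vs \<and> (\<forall>k y. y \<in> \<Union>(vs k) \<longrightarrow> (x,y) \<in> \<Union>(H (k+m)))" if x: "x \<in> topspace X" for x
  proof -
    obtain m where xm: "x \<in> G m (KK m)" using B(2) x KK(2) by auto
    have "(x,y) \<in> \<Union>(H (k+m))" if yk: "y \<in> \<Union>(vv m (KK m) k)" for k y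
    proof -
      obtain V where V: "V \<in> vv m (KK m) k" "y \<in> V" using yk by blast
      have V': "V \<in> vv m (KK m) (k+m-m)" using V by simp
      have VO: "V \<in> Oc (k+m) (KK m)" using inO[OF _ V'] by simp
      have "x \<in> fst (g (k+m) (KK m) V)" using xm V unfolding G_def by blast
      then have "(x,y) \<in> \<Union>(snd (g (k+m) (KK m) V))" using gP[OF VO] V(2) unfolding tubeP_def by blast
      moreover have "snd (g (k+m) (KK m) V) \<subseteq> H (k+m)"
        unfolding H_def using V' by (intro subsetI UN_I[of m] UN_I[of V]) auto
      ultimately show ?thesis by blast
    qed
    moreover have "Pcov (vv m (KK m))" using vvP[OF KK(1), of m] unfolding PP_def by blast
    ultimately show ?thesis by blast
  qed
  ultimately show ?thesis by blast
qed

lemma prod_Menger: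
  fixes X :: "'a topology" and Y :: "'b topology"
  assumes S: "S1 (G_K X) (G_Gamma X)" and MY: "Menger_space Y"
  shows "Menger_space (prod_topology X Y)"
  unfolding Menger_space_def
proof (intro allI impI)
  fix W :: "nat \<Rightarrow> ('a \<times> 'b) set set"
  assume oc: "\<forall>n. open_cover (prod_topology X Y) (W n)"
  have Wop: "\<forall>w\<in>W n. openin (prod_topology X Y) w" for n using oc by (simp add: open_cover_def)
  have Wcov: "topspace (prod_topology X Y) \<subseteq> \<Union>(W n)" for n using oc by (simp add: open_cover_def)
  have vvex: "\<exists>vs. (\<forall>k. finite (vs k) \<and> vs k \<subseteq> tubecov X Y (W (k+m)) K) \<and> \<Union>(\<Union>k. vs k) = topspace Y"
    if K: "compactin X K" for m K
  proof -
    have oc': "\<forall>k. open_cover Y (tubecov X Y (W (k+m)) K)" using tubecov_cover[OF Wop Wcov K] by blast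
    show ?thesis using MY unfolding Menger_space_def
      apply (elim allE[where x="\<lambda>k. tubecov X Y (W (k+m)) K"])
      using oc' by simp
  qed
  have c: "\<exists>H. (\<forall>n. finite (H n) \<and> H n \<subseteq> W n) \<and> (\<forall>x\<in>topspace X. \<exists>vs m. \<Union>(\<Union>k. vs k) = topspace Y \<and> (\<forall>k y. y \<in> \<Union>(vs k) \<longrightarrow> (x,y) \<in> \<Union>(H (k+m))))"
    by (rule core[OF S Wop Wcov]) (erule vvex)
  then obtain H where HH: "(\<forall>n. finite (H n) \<and> H n \<subseteq> W n) \<and> (\<forall>x\<in>topspace X. \<exists>vs m. \<Union>(\<Union>k. vs k) = topspace Y \<and> (\<forall>k y. y \<in> \<Union>(vs k) \<longrightarrow> (x,y) \<in> \<Union>(H (k+m))))"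
    by (rule exE)
  then have H: "\<forall>n. finite (H n) \<and> H n \<subseteq> W n" and Hc: "\<forall>x\<in>topspace X. \<exists>vs m. \<Union>(\<Union>k. vs k) = topspace Y \<and> (\<forall>k y. y \<in> \<Union>(vs k) \<longrightarrow> (x,y) \<in> \<Union>(H (k+m)))"
    by (rule conjunct1, rule conjunct2)
  have "\<Union>(\<Union>n. H n) \<subseteq> topspace (prod_topology X Y)"
    using H Wop openin_subset by blast
  moreover have "topspace (prod_topology X Y) \<subseteq> \<Union>(\<Union>n. H n)"
  proof
    fix z assume "z \<in> topspace (prod_topology X Y)"
    then obtain x y where z: "z = (x,y)" "x \<in> topspace X" "y \<in> topspace Y" by auto
    have "\<exists>vs m. (\<Union>(\<Union>k. vs k) = topspace Y) \<and> (\<forall>k y. y \<in> \<Union>(vs k) \<longrightarrow> (x,y) \<in> \<Union>(H (k+m)))" using Hc z(2) by (rule bspec)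
    then obtain vs where "\<exists>m. (\<Union>(\<Union>k. vs k) = topspace Y) \<and> (\<forall>k y. y \<in> \<Union>(vs k) \<longrightarrow> (x,y) \<in> \<Union>(H (k+m)))" by (rule exE)
    then obtain m where vsm: "(\<Union>(\<Union>k. vs k) = topspace Y) \<and> (\<forall>k y. y \<in> \<Union>(vs k) \<longrightarrow> (x,y) \<in> \<Union>(H (k+m)))" by (rule exE)
    then have vs: "\<Union>(\<Union>k. vs k) = topspace Y" "\<forall>k y. y \<in> \<Union>(vs k) \<longrightarrow> (x,y) \<in> \<Union>(H (k+m))" by (rule conjunct1, rule conjunct2)
    obtain k where "y \<in> \<Union>(vs k)" using vs(1) z(3) by blast
    then have "(x,y) \<in> \<Union>(H (k+m))" using vs(2) by blast
    then show "z \<in> \<Union>(\<Union>n. H n)" using z(1) by blast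
  qed
  ultimately show "\<exists>V. (\<forall>n. finite (V n) \<and> V n \<subseteq> W n) \<and> \<Union>(\<Union>n. V n) = topspace (prod_topology X Y)"
    using H by blast
qed

lemma prod_Hurewicz:
  fixes X :: "'a topology" and Y :: "'b topology"
  assumes S: "S1 (G_K X) (G_Gamma X)" and MY: "Hurewicz_space Y"
  shows "Hurewicz_space (prod_topology X Y)"
  unfolding Hurewicz_space_def
proof (intro allI impI)
  fix W :: "nat \<Rightarrow> ('a \<times> 'b) set set"
  assume oc: "\<forall>n. open_cover (prod_topology X Y) (W n)"
  have Wop: "\<forall>w\<in>W n. openin (prod_topology X Y) w" for n using oc by (simp add: open_cover_def)
  have Wcov: "topspace (prod_topology X Y) \<subseteq> \<Union>(W n)" for n using oc by (simp add: open_cover_def)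
  have vvex: "\<exists>vs. (\<forall>k. finite (vs k) \<and> vs k \<subseteq> tubecov X Y (W (k+m)) K) \<and> (\<forall>y\<in>topspace Y. \<forall>\<^sub>F k in sequentially. y \<in> \<Union>(vs k))"
    if K: "compactin X K" for m K
  proof -
    have oc': "\<forall>k. open_cover Y (tubecov X Y (W (k+m)) K)" using tubecov_cover[OF Wop Wcov K] by blast
    show ?thesis using MY unfolding Hurewicz_space_def
      apply (elim allE[where x="\<lambda>k. tubecov X Y (W (k+m)) K"])
      using oc' by simp
  qed
  have c: "\<exists>H. (\<forall>n. finite (H n) \<and> H n \<subseteq> W n) \<and> (\<forall>x\<in>topspace X. \<exists>vs m. (\<forall>y\<in>topspace Y. \<forall>\<^sub>F k in sequentially. y \<in> \<Union>(vs k)) \<and> (\<forall>k y. y \<in> \<Union>(vs k) \<longrightarrow> (x,y) \<in> \<Union>(H (k+m))))"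
    by (rule core[OF S Wop Wcov]) (erule vvex)
  then obtain H where HH: "(\<forall>n. finite (H n) \<and> H n \<subseteq> W n) \<and> (\<forall>x\<in>topspace X. \<exists>vs m. (\<forall>y\<in>topspace Y. \<forall>\<^sub>F k in sequentially. y \<in> \<Union>(vs k)) \<and> (\<forall>k y. y \<in> \<Union>(vs k) \<longrightarrow> (x,y) \<in> \<Union>(H (k+m))))"
    by (rule exE)
  then have H: "\<forall>n. finite (H n) \<and> H n \<subseteq> W n" and Hc: "\<forall>x\<in>topspace X. \<exists>vs m. (\<forall>y\<in>topspace Y. \<forall>\<^sub>F k in sequentially. y \<in> \<Union>(vs k)) \<and> (\<forall>k y. y \<in> \<Union>(vs k) \<longrightarrow> (x,y) \<in> \<Union>(H (k+m)))"
    by (rule conjunct1, rule conjunct2)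
  have "\<forall>z\<in>topspace (prod_topology X Y). \<forall>\<^sub>F n in sequentially. z \<in> \<Union>(H n)"
  proof
    fix z assume "z \<in> topspace (prod_topology X Y)"
    then obtain x y where z: "z = (x,y)" "x \<in> topspace X" "y \<in> topspace Y" by auto
    have "\<exists>vs m. (\<forall>y\<in>topspace Y. \<forall>\<^sub>F k in sequentially. y \<in> \<Union>(vs k)) \<and> (\<forall>k y. y \<in> \<Union>(vs k) \<longrightarrow> (x,y) \<in> \<Union>(H (k+m)))" using Hc z(2) by (rule bspec)
    then obtain vs where "\<exists>m. (\<forall>y\<in>topspace Y. \<forall>\<^sub>F k in sequentially. y \<in> \<Union>(vs k)) \<and> (\<forall>k y. y \<in> \<Union>(vs k) \<longrightarrow> (x,y) \<in> \<Union>(H (k+m)))" by (rule exE)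
    then obtain m where vsm: "(\<forall>y\<in>topspace Y. \<forall>\<^sub>F k in sequentially. y \<in> \<Union>(vs k)) \<and> (\<forall>k y. y \<in> \<Union>(vs k) \<longrightarrow> (x,y) \<in> \<Union>(H (k+m)))" by (rule exE)
    then have vs: "\<forall>y\<in>topspace Y. \<forall>\<^sub>F k in sequentially. y \<in> \<Union>(vs k)" "\<forall>k y. y \<in> \<Union>(vs k) \<longrightarrow> (x,y) \<in> \<Union>(H (k+m))" by (rule conjunct1, rule conjunct2)
    obtain N where N: "\<And>k. k \<ge> N \<Longrightarrow> y \<in> \<Union>(vs k)" using vs(1) z(3) unfolding eventually_sequentially by blast
    have "z \<in> \<Union>(H n)" if "n \<ge> N + m" for n
    proof -
      have "y \<in> \<Union>(vs (n-m))" using N that by simp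
      then have "(x,y) \<in> \<Union>(H (n-m+m))" using vs(2) by blast
      then show ?thesis using z(1) that by simp
    qed
    then show "\<forall>\<^sub>F n in sequentially. z \<in> \<Union>(H n)" unfolding eventually_sequentially by blast
  qed
  then show "\<exists>V. (\<forall>n. finite (V n) \<and> V n \<subseteq> W n) \<and> (\<forall>x\<in>topspace (prod_topology X Y). \<forall>\<^sub>F n in sequentially. x \<in> \<Union>(V n))"
    using H by blast
qed

lemma prod_Lindelof:
  fixes X :: "'a topology" and Y :: "'b topology"
  assumes S: "S1 (G_K X) (G_Gamma X)" and LY: "Lindelof_space Y"
  shows "Lindelof_space (prod_topology X Y)"
  unfolding Lindelof_space_def
proof (intro allI impI)
  fix U :: "('a \<times> 'b) set set"
  assume oc: "(\<forall>u\<in>U. openin (prod_topology X Y) u) \<and> \<Union>U = topspace (prod_topology X Y)"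
  define W where "W n = U" for n :: nat
  have Wop: "\<forall>w\<in>W n. openin (prod_topology X Y) w" for n using oc by (simp add: W_def)
  have Wcov: "topspace (prod_topology X Y) \<subseteq> \<Union>(W n)" for n using oc by (simp add: W_def)
  have vvex: "\<exists>vs. (\<forall>k. finite (vs k) \<and> vs k \<subseteq> tubecov X Y (W (k+m)) K) \<and> \<Union>(\<Union>k. vs k) = topspace Y"
    if K: "compactin X K" for m K
  proof -
    have "open_cover Y (tubecov X Y U K)" using tubecov_cover[OF Wop Wcov K] by (simp add: W_def)
    then have "\<exists>V. countable V \<and> V \<subseteq> tubecov X Y U K \<and> \<Union>V = topspace Y"
      unfolding open_cover_def by (intro Lindelof_spaceD[OF LY]) auto
    then obtain V where V0: "countable V \<and> V \<subseteq> tubecov X Y U K \<and> \<Union>V = topspace Y"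
      by (rule exE)
    then have V: "countable V" "V \<subseteq> tubecov X Y U K" "\<Union>V = topspace Y" by simp_all
    define vs where "vs k = (if V = {} then {} else {from_nat_into V k})" for k :: nat
    have "\<Union>(\<Union>k. vs k) = \<Union>V"
    proof (cases "V = {}")
      case True then show ?thesis by (simp add: vs_def)
    next
      case False
      then have "(\<Union>k. vs k) = range (from_nat_into V)" by (auto simp: vs_def)
      then show ?thesis using False V(1) by simp
    qed
    moreover have fk: "\<forall>k. finite (vs k) \<and> vs k \<subseteq> tubecov X Y (W (k+m)) K"
      using V(2) from_nat_into[of V] by (auto simp: vs_def W_def)
    ultimately have vsok: "(\<forall>k. finite (vs k) \<and> vs k \<subseteq> tubecov X Y (W (k+m)) K) \<and> \<Union>(\<Union>k. vs k) = topspace Y"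
      using V(3) by simp
    show ?thesis by (rule exI[of _ vs], rule vsok)
  qed
  have c: "\<exists>H. (\<forall>n. finite (H n) \<and> H n \<subseteq> W n) \<and> (\<forall>x\<in>topspace X. \<exists>vs m. \<Union>(\<Union>k. vs k) = topspace Y \<and> (\<forall>k y. y \<in> \<Union>(vs k) \<longrightarrow> (x,y) \<in> \<Union>(H (k+m))))"
    by (rule core[OF S Wop Wcov]) (erule vvex)
  then obtain H where HH: "(\<forall>n. finite (H n) \<and> H n \<subseteq> W n) \<and> (\<forall>x\<in>topspace X. \<exists>vs m. \<Union>(\<Union>k. vs k) = topspace Y \<and> (\<forall>k y. y \<in> \<Union>(vs k) \<longrightarrow> (x,y) \<in> \<Union>(H (k+m))))"
    by (rule exE)
  then have H: "\<forall>n. finite (H n) \<and> H n \<subseteq> W n" and Hc: "\<forall>x\<in>topspace X. \<exists>vs m. \<Union>(\<Union>k. vs k) = topspace Y \<and> (\<forall>k y. y \<in> \<Union>(vs k) \<longrightarrow> (x,y) \<in> \<Union>(H (k+m)))"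
    by (rule conjunct1, rule conjunct2)
  have sub: "(\<Union>n. H n) \<subseteq> U" using H by (auto simp: W_def)
  have "\<Union>(\<Union>n. H n) \<subseteq> topspace (prod_topology X Y)"
    using sub oc openin_subset by blast
  moreover have "topspace (prod_topology X Y) \<subseteq> \<Union>(\<Union>n. H n)"
  proof
    fix z assume "z \<in> topspace (prod_topology X Y)"
    then obtain x y where z: "z = (x,y)" "x \<in> topspace X" "y \<in> topspace Y" by auto
    have "\<exists>vs m. (\<Union>(\<Union>k. vs k) = topspace Y) \<and> (\<forall>k y. y \<in> \<Union>(vs k) \<longrightarrow> (x,y) \<in> \<Union>(H (k+m)))" using Hc z(2) by (rule bspec)
    then obtain vs where "\<exists>m. (\<Union>(\<Union>k. vs k) = topspace Y) \<and> (\<forall>k y. y \<in> \<Union>(vs k) \<longrightarrow> (x,y) \<in> \<Union>(H (k+m)))" by (rule exE)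
    then obtain m where vsm: "(\<Union>(\<Union>k. vs k) = topspace Y) \<and> (\<forall>k y. y \<in> \<Union>(vs k) \<longrightarrow> (x,y) \<in> \<Union>(H (k+m)))" by (rule exE)
    then have vs: "\<Union>(\<Union>k. vs k) = topspace Y" "\<forall>k y. y \<in> \<Union>(vs k) \<longrightarrow> (x,y) \<in> \<Union>(H (k+m))" by (rule conjunct1, rule conjunct2)
    obtain k where "y \<in> \<Union>(vs k)" using vs(1) z(3) by blast
    then have "(x,y) \<in> \<Union>(H (k+m))" using vs(2) by blast
    then show "z \<in> \<Union>(\<Union>n. H n)" using z(1) by blast
  qed
  moreover have "countable (\<Union>n. H n)" using H by (auto intro: countable_finite)
  ultimately show "\<exists>V. countable V \<and> V \<subseteq> U \<and> \<Union>V = topspace (prod_topology X Y)"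
    using sub by blast
qed

theorem theorem4p12:
  fixes X :: "'a topology"
  assumes "infinite (topspace X)" and "t1_space X"
    and "S1 (G_K X) (G_Gamma X)"
  shows "productively Lindelof_space (Lindelof_space :: 'b topology \<Rightarrow> bool) X
       \<and> productively Menger_space (Menger_space :: 'b topology \<Rightarrow> bool) X
       \<and> productively Hurewicz_space (Hurewicz_space :: 'b topology \<Rightarrow> bool) X"
  unfolding productively_def
  using prod_Lindelof[OF assms(3)] prod_Menger[OF assms(3)] prod_Hurewicz[OF assms(3)]
  by blast

end
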